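(* Let $q$ be an indeterminate (with square root $q^{1/2}$) and put $X_n=\frac{[n][n+1]}{q^n}$ for $n\geq 0$. For integers $k,m$ define the polynomials \begin{align*} c_{k,m}(q)&=h_{2m-k}(\{1,q^2\}^{k-m+1})+q\,h_{2m-k-1}(\{1,q^2\}^{k-m+1}),\\ g_{k,m}(q)&=h_{2m-k}(\{1\}^{k-m+1},\{q\}^{k-m})+h_{2m-k}(\{1\}^{k-m},\{q\}^{k-m+1}),\\ d_{k,m}(q)&=g_{k,m}(q^2)+q\,g_{k-1,m-1}(q^2). \end{align*} Then for all integers $m,l\geq1$, with all sums over integers $k\ge 0$ (only finitely many terms are nonzero): \begin{align*} X_l^{m+1}-X_{l-1}^{m+1}&=\sum_k h_{m-2k}(\{1,q\}^{k+1})\,[2l]\,[l]^{2(m-k)}q^{-l(m-k+1)},\\ \frac{1-q^{l+\frac12}}{(1-q^{\frac12})q^{\frac l2}}X_l^m-\frac{1-q^{l-\frac12}}{(1-q^{\frac12})q^{\frac{l-1}{2}}}X_{l-1}^m&=\sum_k c_{m,m-k}(q^{\frac12})\,[2l]\,[l]^{2(m-k)-1}q^{-l(m-k+\frac12)},\\ X_l^m+X_{l-1}^m&=\sum_k g_{m,m-k}(q)\,[l]^{2(m-k)}q^{-l(m-k)},\\ \frac{1-q^{l+\frac12}}{(1-q^{\frac12})q^{\frac l2}}X_l^{m-1}+\frac{1-q^{l-\frac12}}{(1-q^{\frac12})q^{\frac{l-1}{2}}}X_{l-1}^{m-1}&=\sum_k d_{m,m-k}(q^{\frac12})\,[l]^{2(m-k)-1}q^{-l(m-k-\frac12)}.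 \end{align*}
   Context: For an integer $k\ge0$, $[k]=\frac{1-q^k}{1-q}$. For integers $r,s\geq0$, $h_n(\{1\}^r,\{x\}^s)$ is defined by $\sum_{n\geq0}h_n(\{1\}^r,\{x\}^s)z^n=\frac{1}{(1-z)^r(1-xz)^s}$ (so $h_n=0$ for $n<0$), with the convention $h_n(\{1\}^r,\{x\}^s)=0$ if $r<0$ or $s<0$. One writes $h_n(\{1,x\}^r)$ for $h_n(\{1\}^r,\{x\}^r)$. The notation $c_{m,m-k}(q^{1/2})$ etc. means the polynomial $c_{m,m-k}$ evaluated at $q^{1/2}$. *)

theory Defs
  imports "HOL-Computational_Algebra.Formal_Power_Series"
begin

text \<open>Throughout, the variable s plays the role of q^(1/2), so q = s^2.\<close>

definition qint :: "'a::field \<Rightarrow> int \<Rightarrow> 'a" where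
  "qint s k = (1 - (s^2) powi k) / (1 - s^2)"

text \<open>h_n({1}^r,{x}^t): coefficient of z^n in 1/((1-z)^r (1-xz)^t);
  zero if n < 0, r < 0 or t < 0.\<close>
definition hh :: "int \<Rightarrow> int \<Rightarrow> int \<Rightarrow> 'a::field \<Rightarrow> 'a" where
  "hh n r t x = (if n < 0 \<or> r < 0 \<or> t < 0 then 0
     else fps_nth (inverse ((1 - fps_X) ^ nat r * (1 - fps_const x * fps_X) ^ nat t)) (nat n))"

definition hsym :: "int \<Rightarrow> int \<Rightarrow> 'a::field \<Rightarrow> 'a" where
  "hsym n r x = hh n r r x"

definition cpol :: "int \<Rightarrow> int \<Rightarrow> 'a::field \<Rightarrow> 'a" where
  "cpol k m t = hsym (2*m - k) (k - m + 1) (t^2) + t * hsym (2*m - k - 1) (k - m + 1) (t^2)"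

definition gpol :: "int \<Rightarrow> int \<Rightarrow> 'a::field \<Rightarrow> 'a" where
  "gpol k m t = hh (2*m - k) (k - m + 1) (k - m) t + hh (2*m - k) (k - m) (k - m + 1) t"

definition dpol :: "int \<Rightarrow> int \<Rightarrow> 'a::field \<Rightarrow> 'a" where
  "dpol k m t = gpol k m (t^2) + t * gpol (k - 1) (m - 1) (t^2)"

definition Xq :: "'a::field \<Rightarrow> int \<Rightarrow> 'a" where
  "Xq s n = qint s n * qint s (n + 1) / (s^2) powi n"

end

theory Submission
  imports Defs
begin

unbundle fps_syntax

lemma hh_neg: "n < 0 \<Longrightarrow> hh n r t x = 0" by (simp add: hh_def)
lemma hsym_neg: "n < 0 \<Longrightarrow> hsym n r x = 0" by (simp add: hsym_def hh_def)

lemma hsym_r0: "hsym n 0 (x::'a::field) = (if n = 0 then 1 else 0)"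
  by (auto simp: hsym_def hh_def)

lemma fps_aux_inv:
  fixes D G :: "'a::field fps"
  assumes "D $ 0 \<noteq> 0"
  shows "inverse G = D * inverse (D * G)"
proof -
  have "D * inverse (D * G) = (D * inverse D) * inverse G" by (simp add: fps_inverse_mult mult_ac)
  also have "D * inverse D = 1" using inverse_mult_eq_1[OF assms] by (simp add: mult.commute)
  finally show ?thesis by simp
qed

lemma coeff3:
  fixes G :: "'a::field fps"
  shows "((1 - fps_const b * fps_X + fps_const c * fps_X^2) * G) $ n
     = G $ n - b * (if n = 0 then 0 else G $ (n - 1)) + c * (if n < 2 then 0 else G $ (n - 2))"
proof -
  have "(1 - fps_const b * fps_X + fps_const c * fps_X^2) * G = G - fps_const b * (fps_X * G) + fps_const c * (fps_X^2 * G)"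
    by (simp add: algebra_simps)
  then show ?thesis by (simp add: fps_X_power_mult_nth del: power2_eq_square)
qed

lemma hsym_rec:
  fixes x :: "'a::field"
  assumes "r \<ge> 0"
  shows "hsym n (r+1) x = hsym n r x + (1+x) * hsym (n-1) (r+1) x - x * hsym (n-2) (r+1) x"
proof (cases "n < 0")
  case True then show ?thesis by (simp add: hsym_neg)
next
  case False
  define A where "A = (\<lambda>k. (1 - fps_X) ^ k * (1 - fps_const x * fps_X) ^ k :: 'a fps)"
  define D where "D = ((1 - fps_X) * (1 - fps_const x * fps_X) :: 'a fps)"
  have D0: "D $ 0 \<noteq> 0" by (simp add: D_def)
  have AS: "A (Suc k) = D * A k" for k by (simp add: A_def D_def mult_ac)
  have D3: "D = 1 - fps_const (1+x) * fps_X + fps_const x * fps_X^2"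
    by (simp add: D_def algebra_simps power2_eq_square fps_const_add [symmetric])
  have nr: "nat (r+1) = Suc (nat r)" using assms by simp
  have key: "inverse (A (nat r)) = D * inverse (A (Suc (nat r)))"
    using fps_aux_inv[OF D0, of "A (nat r)"] AS by simp
  have hs: "hsym k j x = (if k < 0 \<or> j < 0 then 0 else inverse (A (nat j)) $ nat k)" for k j
    by (simp add: hsym_def hh_def A_def)
  have "hsym n r x = inverse (A (nat r)) $ nat n" using False assms by (simp add: hs)
  also have "\<dots> = (D * inverse (A (Suc (nat r)))) $ nat n" by (simp add: key)
  also have "\<dots> = hsym n (r+1) x - (1+x) * hsym (n-1) (r+1) x + x * hsym (n-2) (r+1) x"
    unfolding D3 coeff3 using False assms
    apply (simp add: hs nr)
    apply (intro conjI impI; (simp add: nat_diff_distrib')?)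
    done
  finally show ?thesis by (simp add: algebra_simps)
qed

lemma hh_rel:
  fixes x :: "'a::field"
  assumes "r \<ge> 0"
  shows "hh n (r+1) r x = hsym n (r+1) x - x * hsym (n-1) (r+1) x"
    and "hh n r (r+1) x = hsym n (r+1) x - hsym (n-1) (r+1) x"
proof -
  define A where "A = (\<lambda>k. (1 - fps_X) ^ k * (1 - fps_const x * fps_X) ^ k :: 'a fps)"
  have nr: "nat (r+1) = Suc (nat r)" using assms by simp
  have hs: "hsym k j x = (if k < 0 \<or> j < 0 then 0 else inverse (A (nat j)) $ nat k)" for k j
    by (simp add: hsym_def hh_def A_def)
  have e1: "inverse ((1 - fps_X) ^ Suc (nat r) * (1 - fps_const x * fps_X) ^ nat r)
      = (1 - fps_const x * fps_X) * inverse (A (Suc (nat r)))"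
    using fps_aux_inv[of "1 - fps_const x * fps_X" "(1 - fps_X) ^ Suc (nat r) * (1 - fps_const x * fps_X) ^ nat r"]
    by (simp add: A_def mult_ac)
  have e2: "inverse ((1 - fps_X) ^ nat r * (1 - fps_const x * fps_X) ^ Suc (nat r))
      = (1 - fps_X) * inverse (A (Suc (nat r)))"
    using fps_aux_inv[of "1 - fps_X" "(1 - fps_X) ^ nat r * (1 - fps_const x * fps_X) ^ Suc (nat r)"]
    by (simp add: A_def mult_ac)
  show "hh n (r+1) r x = hsym n (r+1) x - x * hsym (n-1) (r+1) x"
  proof (cases "n < 0")
    case True then show ?thesis by (simp add: hsym_neg hh_neg)
  next
    case False
    have "(1 - fps_const x * fps_X) * inverse (A (Suc (nat r))) = inverse (A (Suc (nat r))) - fps_const x * (fps_X * inverse (A (Suc (nat r))))"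
      by (simp add: algebra_simps)
    then show ?thesis using False assms
      apply (simp add: hh_def nr e1 hs del: power_Suc)
      apply (intro conjI impI; (simp add: nat_diff_distrib')?)
      done
  qed
  show "hh n r (r+1) x = hsym n (r+1) x - hsym (n-1) (r+1) x"
  proof (cases "n < 0")
    case True then show ?thesis by (simp add: hsym_neg hh_neg)
  next
    case False
    have "(1 - fps_X) * inverse (A (Suc (nat r))) = inverse (A (Suc (nat r))) - (fps_X * inverse (A (Suc (nat r))))"
      by (simp add: algebra_simps)
    then show ?thesis using False assms
      apply (simp add: hh_def nr e2 hs del: power_Suc)
      apply (intro conjI impI; (simp add: nat_diff_distrib')?)
      done
  qed
qed

definition Tm :: "'a::field \<Rightarrow> 'a \<Rightarrow> nat \<Rightarrow> nat \<Rightarrow> 'a" where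
  "Tm q Y m k = hsym (int m - 2*int k) (int k + 1) q * Y^(m-k)"
definition HH :: "'a::field \<Rightarrow> 'a \<Rightarrow> nat \<Rightarrow> 'a" where
  "HH q Y m = (\<Sum>k<Suc m. Tm q Y m k)"

lemma Tm_zero: "int m < 2*int k \<Longrightarrow> Tm q Y m k = 0"
  by (simp add: Tm_def hsym_neg)

lemma HH_ext: "m < N \<Longrightarrow> HH q Y m = (\<Sum>k<N. Tm q Y m k)"
  unfolding HH_def
  by (rule sum.mono_neutral_left) (auto intro!: Tm_zero)

lemma HH_0: "HH q Y 0 = 1"
  by (simp add: HH_def Tm_def hsym_rec[of 0 0, simplified] hsym_r0 hsym_neg)

lemma hsym01: "hsym 0 1 (q::'a::field) = 1" "hsym 1 1 q = 1 + q"
proof -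
  show a: "hsym 0 1 q = 1" using hsym_rec[of 0 0 q] by (simp add: hsym_r0 hsym_neg)
  show "hsym 1 1 q = 1 + q" using hsym_rec[of 0 1 q] by (simp add: hsym_r0 hsym_neg a)
qed

lemma HH_1: "HH q Y (Suc 0) = (1+q) * Y"
  by (simp add: HH_def Tm_def hsym01 hsym_neg)

lemma Tm_step:
  "Tm q Y (m+2) k = hsym (int m + 2 - 2*int k) (int k) q * Y^(m+2-k)
     + (1+q)*Y*Tm q Y (m+1) k - q*Y^2 * Tm q Y m k"
proof (cases "k \<le> m")
  case True
  have e1: "Y^(Suc (Suc m)-k) = Y^2 * Y^(m-k)" "Y^(Suc m-k) = Y * Y^(m-k)"
    using True by (simp_all add: power_add[symmetric] Suc_diff_le)
  have h: "hsym (int m + 2 - int k * 2) (1 + int k) q = hsym (int m + 2 - 2*int k) (int k) q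
     + (1+q) * hsym (int m + 1 - 2*int k) (int k + 1) q - q * hsym (int m - 2*int k) (int k + 1) q"
    using hsym_rec[of "int k" "int m + 2 - 2*int k" q] by (simp add: algebra_simps)
  show ?thesis by (simp add: Tm_def e1 h algebra_simps power2_eq_square)
next
  case False
  have z: "Tm q Y (m+1) k = 0" "Tm q Y m k = 0" using False by (auto intro!: Tm_zero)
  have h: "hsym (int m + 2 - 2*int k) (int k + 1) q = hsym (int m + 2 - 2*int k) (int k) q"
    using hsym_rec[of "int k" "int m + 2 - 2*int k" q] False by (simp add: algebra_simps hsym_neg)
  show ?thesis unfolding Tm_def using h False by (simp add: algebra_simps hsym_neg)
qed

lemma HH_rec: "HH q Y (m+2) = (1+q)*Y*HH q Y (m+1) - (q*Y^2 - Y) * HH q Y m"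
proof -
  define U where "U k = hsym (int m + 2 - 2*int k) (int k) q * Y^(m+2-k)" for k
  have U0: "U 0 = 0" by (simp add: U_def hsym_r0)
  have US: "U (Suc j) = Y * Tm q Y m j" for j
  proof (cases "j \<le> m")
    case True
    then have "Y^(m+2 - Suc j) = Y * Y^(m-j)" by (simp add: Suc_diff_le)
    then show ?thesis by (simp add: U_def Tm_def algebra_simps)
  next
    case False then show ?thesis by (simp add: U_def Tm_def hsym_neg)
  qed
  have sU: "(\<Sum>k<m+3. U k) = Y * HH q Y m"
  proof -
    have "m+3 = Suc (m+2)" by simp
    then have "(\<Sum>k<m+3. U k) = (\<Sum>k<Suc (m+2). U k)" by (simp only:)
    also have "\<dots> = U 0 + (\<Sum>j<m+2. U (Suc j))" by (rule sum.lessThan_Suc_shift)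
    also have "\<dots> = Y * (\<Sum>j<m+2. Tm q Y m j)" by (simp add: U0 US sum_distrib_left del: sum.lessThan_Suc)
    also have "\<dots> = Y * HH q Y m" by (simp add: HH_ext[of m "m+2"] del: sum.lessThan_Suc)
    finally show ?thesis .
  qed
  have "HH q Y (m+2) = (\<Sum>k<m+3. Tm q Y (m+2) k)" by (rule HH_ext) simp
  also have "\<dots> = (\<Sum>k<m+3. U k + (1+q)*Y*Tm q Y (m+1) k - q*Y^2*Tm q Y m k)"
    by (rule sum.cong[OF refl]) (simp only: Tm_step U_def)
  also have "\<dots> = (\<Sum>k<m+3. U k) + (1+q)*Y*(\<Sum>k<m+3. Tm q Y (m+1) k) - q*Y^2*(\<Sum>k<m+3. Tm q Y m k)"
    by (simp only: sum.distrib sum_subtractf sum_distrib_left)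
  also have "\<dots> = Y * HH q Y m + (1+q)*Y*HH q Y (m+1) - q*Y^2*HH q Y m"
    by (simp add: sU HH_ext[of "Suc m" "m+3"] HH_ext[of m "m+3"] del: sum.lessThan_Suc)
  finally show ?thesis by (simp add: algebra_simps)
qed

lemma rec_uniq:
  fixes f g :: "nat \<Rightarrow> 'a::comm_ring"
  assumes "f 0 = g 0" "f 1 = g 1" "\<And>m. f (m+2) = A*f(m+1) - B*f m" "\<And>m. g (m+2) = A*g(m+1) - B*g m"
  shows "f m = g m"
proof -
  have "f m = g m \<and> f (Suc m) = g (Suc m)"
  proof (induction m)
    case 0 then show ?case using assms by simp
  next
    case (Suc m)
    then show ?case using assms(3)[of m] assms(4)[of m] by simp
  qed
  then show ?thesis by simp
qed

lemma HH_recS: "HH q Y (Suc (Suc m)) = (1+q)*Y*HH q Y (Suc m) - (q*Y^2 - Y) * HH q Y m"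
  using HH_rec[of q Y m] by simp

definition Hz :: "'a::field \<Rightarrow> 'a \<Rightarrow> nat \<Rightarrow> 'a" where
  "Hz q Y m = (if m = 0 then 0 else HH q Y (m-1))"

lemma Hz_rec: "Hz q Y (m+2) = (1+q)*Y*Hz q Y (m+1) - (q*Y^2 - Y) * Hz q Y m"
proof (cases m)
  case 0 then show ?thesis by (simp add: Hz_def HH_0 HH_1)
next
  case (Suc n) then show ?thesis using HH_rec[of q Y n] by (simp add: Hz_def)
qed

lemma Hz_recS: "Hz q Y (Suc (Suc m)) = (1+q)*Y*Hz q Y (Suc m) - (q*Y^2 - Y) * Hz q Y m"
  using Hz_rec[of q Y m] by simp

lemma PM_rec:
  fixes P M :: "'a::field"
  assumes "P + M = (1+q)*Y" "P*M = q*Y^2 - Y"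
  shows "a*P^(m+2) + b*M^(m+2) = (1+q)*Y*(a*P^(m+1) + b*M^(m+1)) - (q*Y^2 - Y)*(a*P^m + b*M^m)"
proof -
  have "a*P^(m+2) + b*M^(m+2) = (P+M)*(a*P^(m+1) + b*M^(m+1)) - (P*M)*(a*P^m + b*M^m)"
    by (simp add: algebra_simps power_Suc)
  then show ?thesis using assms by simp
qed

lemma L1:
  fixes P M :: "'a::field"
  assumes "P + M = (1+q)*Y" "P*M = q*Y^2 - Y"
  shows "P^(m+1) - M^(m+1) = (P-M)*HH q Y m"
proof -
  have "P*P^m + (-M)*M^m = (P-M)*HH q Y m"
  proof (rule rec_uniq[where A="(1+q)*Y" and B="q*Y^2 - Y"])
    show "P * P ^ 0 + - M * M ^ 0 = (P - M) * HH q Y 0" by (simp add: HH_0)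
    show "P * P ^ 1 + - M * M ^ 1 = (P - M) * HH q Y 1"
    proof -
      have e: "M = (1+q)*Y - P" using assms(1) by (simp add: algebra_simps)
      show ?thesis unfolding One_nat_def HH_1 e by (simp add: algebra_simps)
    qed
    show "P * P ^ (m + 2) + - M * M ^ (m + 2) = (1 + q) * Y * (P * P ^ (m + 1) + - M * M ^ (m + 1)) - (q * Y\<^sup>2 - Y) * (P * P ^ m + - M * M ^ m)" for m
      by (rule PM_rec[OF assms])
    show "(P - M) * HH q Y (m + 2) = (1 + q) * Y * ((P - M) * HH q Y (m + 1)) - (q * Y\<^sup>2 - Y) * ((P - M) * HH q Y m)" for m
      by (simp add: HH_recS algebra_simps)
  qed
  then show ?thesis by simp
qed

lemma L3:
  fixes P M :: "'a::field"
  assumes "P + M = (1+q)*Y" "P*M = q*Y^2 - Y"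
  shows "P^m + M^m = 2*HH q Y m - (1+q)*Y*Hz q Y m"
proof -
  have "1*P^m + 1*M^m = 2*HH q Y m - (1+q)*Y*Hz q Y m"
  proof (rule rec_uniq[where A="(1+q)*Y" and B="q*Y^2 - Y"])
    show "1 * P ^ 0 + 1 * M ^ 0 = 2 * HH q Y 0 - (1 + q) * Y * Hz q Y 0" by (simp add: HH_0 Hz_def)
    show "1 * P ^ 1 + 1 * M ^ 1 = 2 * HH q Y 1 - (1 + q) * Y * Hz q Y 1"
      using assms(1) HH_1[of q Y] by (simp add: HH_0 Hz_def algebra_simps)
    show "1 * P ^ (m + 2) + 1 * M ^ (m + 2) = (1 + q) * Y * (1 * P ^ (m + 1) + 1 * M ^ (m + 1)) - (q * Y\<^sup>2 - Y) * (1 * P ^ m + 1 * M ^ m)" for m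
      by (rule PM_rec[OF assms])
    show "2 * HH q Y (m + 2) - (1 + q) * Y * Hz q Y (m + 2) = (1 + q) * Y * (2 * HH q Y (m + 1) - (1 + q) * Y * Hz q Y (m + 1)) - (q * Y\<^sup>2 - Y) * (2 * HH q Y m - (1 + q) * Y * Hz q Y m)" for m
      by (simp add: HH_recS Hz_recS algebra_simps)
  qed
  then show ?thesis by simp
qed

lemma L2:
  fixes P M :: "'a::field"
  assumes "P + M = (1+q)*Y" "P*M = q*Y^2 - Y" "F1 - F0 = K" "F1*M - F0*P = -(K*s*Y)"
  shows "F1*P^m - F0*M^m = K*(HH q Y m + s*Y*Hz q Y m)"
proof -
  have "F1*P^m + (-F0)*M^m = K*(HH q Y m + s*Y*Hz q Y m)"
  proof (rule rec_uniq[where A="(1+q)*Y" and B="q*Y^2 - Y"])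
    show "F1 * P ^ 0 + - F0 * M ^ 0 = K * (HH q Y 0 + s * Y * Hz q Y 0)" using assms(3) by (simp add: HH_0 Hz_def)
    have "F1*P - F0*M = (F1 - F0)*(P+M) - (F1*M - F0*P)" by (simp add: algebra_simps)
    also have "\<dots> = K*((1+q)*Y) + K*s*Y" using assms by simp
    finally show "F1 * P ^ 1 + - F0 * M ^ 1 = K * (HH q Y 1 + s * Y * Hz q Y 1)"
      by (simp add: HH_1 HH_0 Hz_def algebra_simps)
    show "F1 * P ^ (m + 2) + - F0 * M ^ (m + 2) = (1 + q) * Y * (F1 * P ^ (m + 1) + - F0 * M ^ (m + 1)) - (q * Y\<^sup>2 - Y) * (F1 * P ^ m + - F0 * M ^ m)" for m
      by (rule PM_rec[OF assms(1,2)])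
    show "K * (HH q Y (m + 2) + s * Y * Hz q Y (m + 2)) = (1 + q) * Y * (K * (HH q Y (m + 1) + s * Y * Hz q Y (m + 1))) - (q * Y\<^sup>2 - Y) * (K * (HH q Y m + s * Y * Hz q Y m))" for m
      by (simp add: HH_recS Hz_recS algebra_simps)
  qed
  then show ?thesis by simp
qed



lemma conc:
  fixes s u :: "'a::field"
  assumes s0: "s \<noteq> 0" and u0: "u \<noteq> 0" and s1: "1 - s \<noteq> 0" and s2: "1 - s^2 \<noteq> 0"
  assumes A_def: "A =  (1 - s^2*u^2)/(1-s^2)"
  and B_def: "B =  (1 - s^4*u^2)/(1-s^2)"
  and C_def: "C =  (1 - u^2)/(1-s^2)"
  and D_def: "D =  (1 - s^4*u^4)/(1-s^2)"
  and P_def: "P =  A*B/(s^2*u^2)"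
  and M_def: "M =  C*A/u^2"
  and Y_def: "Y =  A^2/(s^2*u^2)"
  and F1_def: "F1 =  (1 - s^3*u^2)/((1-s)*(s*u))"
  and F0_def: "F0 =  (1 - s*u^2)/((1-s)*u)"
  and K_def: "K =  (1 + s^2*u^2)/(s*u)"
  shows "P + M = (1+s^2)*Y" "P*M = s^2*Y^2 - Y" "P - M = D/(s^2*u^2)" "D = A*(1+s^2*u^2)"
    "F1 - F0 = K" "F1*M - F0*P = -(K*s*Y)" "A*F1 = s*u*(P+s*Y)" "A*F0 = s*u*(M+s*Y)"
    "s^2*u^2 = 1 \<Longrightarrow> F1 + F0 = 0"
proof -
  have s1': "1 - s^2 \<noteq> 0" using s2 .
  define e1 where "e1 = inverse (1-s^2)"
  define e2 where "e2 = inverse s"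
  define e3 where "e3 = inverse u"
  define e4 where "e4 = inverse (1-s)"
  have h1: "e1 * (1-s^2) = 1" "e2 * s = 1" "e3 * u = 1" "e4 * (1-s) = 1"
    using assms by (auto simp: e1_def e2_def e3_def e4_def)
  note ds = A_def B_def C_def D_def P_def M_def Y_def F1_def F0_def K_def
  show "P + M = (1+s^2)*Y" unfolding ds divide_inverse inverse_mult_distrib power_inverse[symmetric] e1_def[symmetric] e2_def[symmetric] e3_def[symmetric] e4_def[symmetric] using h1 by algebra
  show "P*M = s^2*Y^2 - Y" unfolding ds divide_inverse inverse_mult_distrib power_inverse[symmetric] e1_def[symmetric] e2_def[symmetric] e3_def[symmetric] e4_def[symmetric] using h1 by algebra
  show "P - M = D/(s^2*u^2)" unfolding ds divide_inverse inverse_mult_distrib power_inverse[symmetric] e1_def[symmetric] e2_def[symmetric] e3_def[symmetric] e4_def[symmetric] using h1 by algebra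
  show "s^2*u^2 = 1 \<Longrightarrow> F1 + F0 = 0" unfolding ds divide_inverse inverse_mult_distrib power_inverse[symmetric] e1_def[symmetric] e2_def[symmetric] e3_def[symmetric] e4_def[symmetric] using h1 by algebra
  show "D = A*(1+s^2*u^2)" unfolding D_def A_def by (simp add: algebra_simps eval_nat_numeral)
  show "F1 - F0 = K" unfolding ds divide_inverse inverse_mult_distrib power_inverse[symmetric] e1_def[symmetric] e2_def[symmetric] e3_def[symmetric] e4_def[symmetric] using h1 by algebra
  show "F1*M - F0*P = -(K*s*Y)" unfolding ds divide_inverse inverse_mult_distrib power_inverse[symmetric] e1_def[symmetric] e2_def[symmetric] e3_def[symmetric] e4_def[symmetric] using h1 by algebra
  show "A*F1 = s*u*(P+s*Y)" unfolding ds divide_inverse inverse_mult_distrib power_inverse[symmetric] e1_def[symmetric] e2_def[symmetric] e3_def[symmetric] e4_def[symmetric] using h1 by algebra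
  show "A*F0 = s*u*(M+s*Y)" unfolding ds divide_inverse inverse_mult_distrib power_inverse[symmetric] e1_def[symmetric] e2_def[symmetric] e3_def[symmetric] e4_def[symmetric] using h1 by algebra
qed



lemma gpol_eq: "gpol (int m) (int m - int k) (x::'a::field) =
   2*hsym (int m - 2*int k) (int k + 1) x - (1+x)*hsym (int m - 2*int k - 1) (int k + 1) x"
proof -
  have e: "2*(int m - int k) - int m = int m - 2*int k" "int m - (int m - int k) + 1 = int k + 1"
     "int m - (int m - int k) = int k" by simp_all
  show ?thesis unfolding gpol_def e hh_rel[of "int k", simplified] by (simp add: algebra_simps)
qed

lemma cpol_eq: "cpol (int m) (int m - int k) (x::'a::field) =
   hsym (int m - 2*int k) (int k + 1) (x^2) + x*hsym (int m - 2*int k - 1) (int k + 1) (x^2)"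
proof -
  have e: "2*(int m - int k) - int m = int m - 2*int k" "int m - (int m - int k) + 1 = int k + 1"
     "2*(int m - int k) - int m - 1 = int m - 2*int k - 1" by simp_all
  show ?thesis unfolding cpol_def e by simp
qed

lemma Sh1: "(\<Sum>k<Suc m. hsym (int m - 2*int k - 1) (int k + 1) q * Y^(m-k)) = Y * Hz q Y m"
proof (cases m)
  case 0 then show ?thesis by (simp add: Hz_def hsym_neg)
next
  case (Suc n)
  have "(\<Sum>k<Suc m. hsym (int m - 2*int k - 1) (int k + 1) q * Y^(m-k)) = (\<Sum>k<Suc m. Y * Tm q Y n k)"
  proof (rule sum.cong[OF refl])
    fix k assume "k \<in> {..<Suc m}"
    show "hsym (int m - 2*int k - 1) (int k + 1) q * Y^(m-k) = Y * Tm q Y n k"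
    proof (cases "k \<le> n")
      case True
      then have "Y^(m-k) = Y * Y^(n-k)" using Suc by (simp add: Suc_diff_le)
      then show ?thesis using Suc by (simp add: Tm_def algebra_simps)
    next
      case False then show ?thesis using Suc by (simp add: Tm_def hsym_neg)
    qed
  qed
  also have "\<dots> = Y * HH q Y n" using Suc by (simp add: sum_distrib_left HH_ext[of n "Suc m"] del: sum.lessThan_Suc)
  finally show ?thesis using Suc by (simp add: Hz_def)
qed

lemma Gsum: "(\<Sum>k<Suc m. gpol (int m) (int m - int k) q * Y^(m-k)) = 2*HH q Y m - (1+q)*Y*Hz q Y m"
proof -
  have "(\<Sum>k<Suc m. gpol (int m) (int m - int k) q * Y^(m-k))
     = 2*(\<Sum>k<Suc m. Tm q Y m k) - (1+q)*(\<Sum>k<Suc m. hsym (int m - 2*int k - 1) (int k + 1) q * Y^(m-k))"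
    by (simp add: gpol_eq Tm_def sum_distrib_left sum_subtractf algebra_simps del: sum.lessThan_Suc)
  then show ?thesis by (simp add: Sh1 HH_def del: sum.lessThan_Suc)
qed

lemma Csum: "(\<Sum>k<Suc m. cpol (int m) (int m - int k) s * Y^(m-k)) = HH (s^2) Y m + s*Y*Hz (s^2) Y m"
proof -
  have "(\<Sum>k<Suc m. cpol (int m) (int m - int k) s * Y^(m-k))
     = (\<Sum>k<Suc m. Tm (s^2) Y m k) + s*(\<Sum>k<Suc m. hsym (int m - 2*int k - 1) (int k + 1) (s^2) * Y^(m-k))"
    by (simp add: cpol_eq Tm_def sum_distrib_left sum.distrib algebra_simps del: sum.lessThan_Suc)
  then show ?thesis by (simp add: Sh1 HH_def del: sum.lessThan_Suc)
qed

lemma gpol_zero: "n < k \<Longrightarrow> gpol (int n) (int n - int k) (x::'a::field) = 0"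
  by (simp add: gpol_eq hsym_neg)

lemma Dsum: "(\<Sum>k<Suc (Suc n). dpol (int (Suc n)) (int (Suc n) - int k) s * Y^(Suc n-k))
   = (\<Sum>k<Suc (Suc n). gpol (int (Suc n)) (int (Suc n) - int k) (s^2) * Y^(Suc n-k))
     + s*Y*(\<Sum>k<Suc n. gpol (int n) (int n - int k) (s^2) * Y^(n-k))"
proof -
  have e: "dpol (int (Suc n)) (int (Suc n) - int k) s = gpol (int (Suc n)) (int (Suc n) - int k) (s^2)
     + s * gpol (int n) (int n - int k) (s^2)" for k
  proof -
    have "int (Suc n) - 1 = int n" "int (Suc n) - int k - 1 = int n - int k" by simp_all
    then show ?thesis unfolding dpol_def by simp
  qed
  have t: "(\<Sum>k<Suc (Suc n). gpol (int n) (int n - int k) (s^2) * Y^(Suc n-k)) = Y*(\<Sum>k<Suc n. gpol (int n) (int n - int k) (s^2) * Y^(n-k))"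
  proof -
    have "(\<Sum>k<Suc (Suc n). gpol (int n) (int n - int k) (s^2) * Y^(Suc n-k)) = (\<Sum>k<Suc n. gpol (int n) (int n - int k) (s^2) * Y^(Suc n-k))"
      using gpol_zero[of n "Suc n" "s^2"] by simp
    also have "\<dots> = (\<Sum>k<Suc n. Y * (gpol (int n) (int n - int k) (s^2) * Y^(n-k)))"
      by (rule sum.cong[OF refl]) (simp add: Suc_diff_le)
    finally show ?thesis by (simp add: sum_distrib_left del: sum.lessThan_Suc)
  qed
  have "(\<Sum>k<Suc (Suc n). dpol (int (Suc n)) (int (Suc n) - int k) s * Y^(Suc n-k))
    = (\<Sum>k<Suc (Suc n). gpol (int (Suc n)) (int (Suc n) - int k) (s^2) * Y^(Suc n-k))
     + s*(\<Sum>k<Suc (Suc n). gpol (int n) (int n - int k) (s^2) * Y^(Suc n-k))"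
    unfolding e by (simp only: distrib_right sum.distrib sum_distrib_left mult.assoc)
  also have "\<dots> = (\<Sum>k<Suc (Suc n). gpol (int (Suc n)) (int (Suc n) - int k) (s^2) * Y^(Suc n-k))
     + s*Y*(\<Sum>k<Suc n. gpol (int n) (int n - int k) (s^2) * Y^(n-k))"
    unfolding t by (simp only: mult.assoc)
  finally show ?thesis .
qed



lemma sum_conv: "(\<Sum>k\<in>{0..int m}. f k) = (\<Sum>k<Suc m. f (int k))"
proof -
  have "{0..int m} = int ` {..<Suc m}"
    by (auto simp: image_iff intro!: bexI[where x="nat _"])
  then show ?thesis by (simp add: sum.reindex del: sum.lessThan_Suc)
qed

lemma powi_nat: "(x::'a::field) powi (int N) = x^N" by (rule power_int_of_nat)
lemma powi_negnat: "(x::'a::field) powi (- int N) = inverse (x^N)"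
  by (simp add: power_int_minus power_int_of_nat)

lemma eA: "k \<le> m \<Longrightarrow> (A::'a::field) powi (2*(int m - int k)) = (A^2)^(m-k)"
proof -
  assume "k \<le> m"
  then have "2*(int m - int k) = int (2*(m-k))" by simp
  then show ?thesis by (simp only: powi_nat power_mult)
qed

lemma eA': "k < m \<Longrightarrow> (A::'a::field) powi (2*(int m - int k) - 1) = A*(A^2)^(m-k-1)"
proof -
  assume "k < m"
  then have "2*(int m - int k) - 1 = int (Suc (2*(m-k-1)))" by simp
  then show ?thesis by (simp only: powi_nat power_mult power_Suc)
qed

lemma eS1: "s^(2*l) = w \<Longrightarrow> k \<le> m \<Longrightarrow> (s::'a::field) powi (- 2 * int l * (int m - int k + 1)) = inverse (w^(m-k+1))"
proof -
  assume a: "s^(2*l) = w" "k \<le> m"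
  obtain j where mj: "m = k + j" using a(2) using le_Suc_ex by blast
  have e: "- 2 * int l * (int m - int k + 1) = - int (2*l*(j+1))" using mj by (simp add: algebra_simps)
  have mk: "m - k = j" using mj by simp
  show ?thesis by (simp only: e mk powi_negnat) (simp only: power_mult[of s "2*l"] a(1))
qed

lemma eS3: "s^(2*l) = w \<Longrightarrow> k \<le> m \<Longrightarrow> (s::'a::field) powi (- 2 * int l * (int m - int k)) = inverse (w^(m-k))"
proof -
  assume a: "s^(2*l) = w" "k \<le> m"
  obtain j where mj: "m = k + j" using a(2) using le_Suc_ex by blast
  have e: "- 2 * int l * (int m - int k) = - int (2*l*j)" using mj by (simp add: algebra_simps)
  have mk: "m - k = j" using mj by simp
  show ?thesis by (simp only: e mk powi_negnat) (simp only: power_mult[of s "2*l"] a(1))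
qed

lemma eS2: "s^l = t \<Longrightarrow> k \<le> m \<Longrightarrow> (s::'a::field) powi (- int l * (2*(int m - int k) + 1)) = inverse (t * (t^2)^(m-k))"
proof -
  assume a: "s^l = t" "k \<le> m"
  obtain j where mj: "m = k + j" using a(2) using le_Suc_ex by blast
  have e: "- int l * (2*(int m - int k) + 1) = - int (l*Suc (2*j))" using mj by (simp add: algebra_simps)
  have mk: "m - k = j" using mj by simp
  have p: "s^(l*Suc(2*j)) = t*(t^2)^j"
  proof -
    have "s^(l*Suc(2*j)) = (s^l)^(Suc(2*j))" by (rule power_mult)
    also have "\<dots> = t*(t^2)^j" unfolding a(1) by (simp add: power_mult)
    finally show ?thesis .
  qed
  show ?thesis by (simp only: e mk powi_negnat p)
qed

lemma eS4: "s^l = t \<Longrightarrow> k < m \<Longrightarrow> (s::'a::field) powi (- int l * (2*(int m - int k) - 1)) = inverse (t * (t^2)^(m-k-1))"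
proof -
  assume a: "s^l = t" "k < m"
  obtain j where mj: "m = Suc (k + j)" using less_imp_Suc_add[OF a(2)] by blast
  have e: "- int l * (2*(int m - int k) - 1) = - int (l*Suc (2*j))" using mj by (simp add: algebra_simps)
  have mk: "m - k - 1 = j" using mj by simp
  have p: "s^(l*Suc(2*j)) = t*(t^2)^j"
  proof -
    have "s^(l*Suc(2*j)) = (s^l)^(Suc(2*j))" by (rule power_mult)
    also have "\<dots> = t*(t^2)^j" unfolding a(1) by (simp add: power_mult)
    finally show ?thesis .
  qed
  show ?thesis by (simp only: e mk powi_negnat p)
qed

theorem lemma2p2:
  fixes s :: "'a::field_char_0" and m l :: nat
  assumes "s \<noteq> 0" and "s \<noteq> 1" and "s^2 \<noteq> 1"
    and "m \<ge> 1" and "l \<ge> 1"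
  shows
   "(Xq s (int l) ^ (m+1) - Xq s (int l - 1) ^ (m+1)
      = (\<Sum>k\<in>{0..int m}. hsym (int m - 2*k) (k + 1) (s^2) * qint s (2 * int l)
            * qint s (int l) powi (2*(int m - k)) * s powi (- 2 * int l * (int m - k + 1)))) \<and>
   ((1 - s^(2*l+1)) / ((1 - s) * s^l) * Xq s (int l) ^ m
      - (1 - s^(2*l-1)) / ((1 - s) * s^(l-1)) * Xq s (int l - 1) ^ m
      = (\<Sum>k\<in>{0..int m}. cpol (int m) (int m - k) s * qint s (2 * int l)
            * qint s (int l) powi (2*(int m - k) - 1) * s powi (- int l * (2*(int m - k) + 1)))) \<and>
   (Xq s (int l) ^ m + Xq s (int l - 1) ^ m
      = (\<Sum>k\<in>{0..int m}. gpol (int m) (int m - k) (s^2)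
            * qint s (int l) powi (2*(int m - k)) * s powi (- 2 * int l * (int m - k)))) \<and>
   ((1 - s^(2*l+1)) / ((1 - s) * s^l) * Xq s (int l) ^ (m-1)
      + (1 - s^(2*l-1)) / ((1 - s) * s^(l-1)) * Xq s (int l - 1) ^ (m-1)
      = (\<Sum>k\<in>{0..int m}. dpol (int m) (int m - k) s
            * qint s (int l) powi (2*(int m - k) - 1) * s powi (- int l * (2*(int m - k) - 1))))"
proof -
  obtain n where ln: "l = Suc n" using assms(5) by (cases l) auto
  define u where "u = s^n"
  have s0: "s \<noteq> 0" and u0: "u \<noteq> 0" and s1: "1 - s \<noteq> 0" and s2: "1 - s^2 \<noteq> 0"
    using assms by (auto simp: u_def)
  define A where "A = (1 - s^2*u^2)/(1-s^2)"
  define B where "B = (1 - s^4*u^2)/(1-s^2)"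
  define C where "C = (1 - u^2)/(1-s^2)"
  define D where "D = (1 - s^4*u^4)/(1-s^2)"
  define P where "P = A*B/(s^2*u^2)"
  define M where "M = C*A/u^2"
  define Y where "Y = A^2/(s^2*u^2)"
  define F1 where "F1 = (1 - s^3*u^2)/((1-s)*(s*u))"
  define F0 where "F0 = (1 - s*u^2)/((1-s)*u)"
  define K where "K = (1 + s^2*u^2)/(s*u)"
  note cc = conc[OF s0 u0 s1 s2 A_def B_def C_def D_def P_def M_def Y_def F1_def F0_def K_def]
  have sl: "s^l = s*u" by (simp add: ln u_def)
  have s2l: "s^(2*l) = s^2*u^2"
  proof -
    have "s^(2*l) = (s^l)^2" by (simp add: power_mult[symmetric] mult.commute)
    then show ?thesis by (simp add: sl power_mult_distrib)
  qed
  have qA: "qint s (int l) = A" unfolding qint_def A_def powi_nat by (simp add: power_mult[symmetric] s2l)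
  have s2l': "s^(l+l) = s^2*u^2" using s2l by (simp add: mult_2)
  have pw2: "(s^2)^N = s^(2*N)" for N by (simp add: power_mult)
  have qB: "qint s (int l + 1) = B"
  proof -
    have "int l + 1 = int (Suc l)" by simp
    then have "(s^2) powi (int l + 1) = (s^2)^(Suc l)" by (simp only: powi_nat)
    also have "\<dots> = s^2 * s^(2*l)" by (simp only: power_Suc pw2)
    also have "\<dots> = s^4*u^2" by (simp add: s2l s2l' eval_nat_numeral)
    finally show ?thesis unfolding B_def qint_def by simp
  qed
  have qC: "qint s (int l - 1) = C"
  proof -
    have "int l - 1 = int n" by (simp add: ln)
    then have "(s^2) powi (int l - 1) = (s^2)^n" by (simp only: powi_nat)
    also have "\<dots> = u^2" by (simp add: pw2 u_def power_mult[symmetric] mult.commute)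
    finally show ?thesis unfolding C_def qint_def by simp
  qed
  have qD: "qint s (2 * int l) = D"
  proof -
    have "2 * int l = int (2*l)" by simp
    then have "(s^2) powi (2 * int l) = (s^2)^(2*l)" by (simp only: powi_nat)
    also have "\<dots> = (s^(2*l))^2" by (simp add: power_mult[symmetric] mult.commute)
    also have "\<dots> = s^4*u^4" by (simp only: s2l) (simp add: power_mult_distrib power_mult[symmetric])
    finally show ?thesis unfolding D_def qint_def by simp
  qed
  have XP: "Xq s (int l) = P"
  proof -
    have "(s^2) powi (int l) = s^2*u^2" by (simp add: powi_nat pw2 s2l s2l')
    then show ?thesis unfolding Xq_def P_def qA qB by simp
  qed
  have XM: "Xq s (int l - 1) = M"
  proof -
    have "int l - 1 = int n" by (simp add: ln)
    then have "(s^2) powi (int l - 1) = (s^2)^n" by (simp only: powi_nat)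
    also have "\<dots> = u^2" by (simp add: pw2 u_def power_mult[symmetric] mult.commute)
    moreover have "int l - 1 + 1 = int l" by simp
    ultimately show ?thesis unfolding Xq_def M_def qC by (simp add: qA mult.commute)
  qed
  have hF1: "(1 - s^(2*l+1)) / ((1 - s) * s^l) = F1"
  proof -
    have "s^(2*l+1) = s^3*u^2" by (simp add: s2l s2l' eval_nat_numeral)
    then show ?thesis unfolding F1_def sl by simp
  qed
  have hF0: "(1 - s^(2*l-1)) / ((1 - s) * s^(l-1)) = F0"
  proof -
    have "2*l-1 = Suc (2*n)" by (simp add: ln)
    then have "s^(2*l-1) = s*u^2" by (simp add: u_def power_mult[symmetric] mult.commute)
    moreover have "s^(l-1) = u" by (simp add: ln u_def)
    ultimately show ?thesis unfolding F0_def by simp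
  qed
  have w0: "s^2*u^2 \<noteq> 0" using s0 u0 by simp
  have su0: "s*u \<noteq> 0" using s0 u0 by simp
  have L1': "P^(m+1) - M^(m+1) = (P-M)*HH (s^2) Y m" using L1[OF cc(1) cc(2)] by simp
  have I1: "P^(m+1) - M^(m+1) = (\<Sum>k<Suc m. hsym (int m - 2*int k) (int k + 1) (s^2) * D
     * A powi (2*(int m - int k)) * s powi (- 2 * int l * (int m - int k + 1)))"
  proof -
    have "P^(m+1) - M^(m+1) = (\<Sum>k<Suc m. (P-M)*Tm (s^2) Y m k)"
      unfolding L1' by (simp add: HH_def sum_distrib_left del: sum.lessThan_Suc)
    also have "\<dots> = (\<Sum>k<Suc m. hsym (int m - 2*int k) (int k + 1) (s^2) * D
     * A powi (2*(int m - int k)) * s powi (- 2 * int l * (int m - int k + 1)))"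
    proof (rule sum.cong[OF refl])
      fix k assume "k \<in> {..<Suc m}"
      then have km: "k \<le> m" by simp
      show "(P-M)*Tm (s^2) Y m k = hsym (int m - 2*int k) (int k + 1) (s^2) * D
     * A powi (2*(int m - int k)) * s powi (- 2 * int l * (int m - int k + 1))"
        unfolding eA[OF km] eS1[OF s2l km] Tm_def cc(3) Y_def
        using w0 by (simp add: power_divide field_simps)
    qed
    finally show ?thesis .
  qed
  have I2: "F1*P^m - F0*M^m = (\<Sum>k<Suc m. cpol (int m) (int m - int k) s * D
     * A powi (2*(int m - int k) - 1) * s powi (- int l * (2*(int m - int k) + 1)))"
  proof -
    have "F1*P^m - F0*M^m = K*(HH (s^2) Y m + s*Y*Hz (s^2) Y m)" using L2[OF cc(1) cc(2) cc(5) cc(6)] by simp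
    also have "\<dots> = (\<Sum>k<Suc m. K*(cpol (int m) (int m - int k) s * Y^(m-k)))"
      unfolding Csum[symmetric] by (simp add: sum_distrib_left del: sum.lessThan_Suc)
    also have "\<dots> = (\<Sum>k<Suc m. cpol (int m) (int m - int k) s * D
     * A powi (2*(int m - int k) - 1) * s powi (- int l * (2*(int m - int k) + 1)))"
    proof (rule sum.cong[OF refl])
      fix k assume "k \<in> {..<Suc m}"
      then have km: "k \<le> m" by simp
      show "K*(cpol (int m) (int m - int k) s * Y^(m-k)) = cpol (int m) (int m - int k) s * D
     * A powi (2*(int m - int k) - 1) * s powi (- int l * (2*(int m - int k) + 1))"
      proof (cases "k = m")
        case True
        have "cpol (int m) (int m - int k) s = 0" unfolding cpol_eq using True assms(4) by (simp add: hsym_neg)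
        then show ?thesis by simp
      next
        case False
        then have km': "k < m" using km by simp
        then obtain j where j: "m - k = Suc j" by (metis Suc_diff_Suc)
        then have j': "m - k - 1 = j" by simp
        show ?thesis
          unfolding eA'[OF km'] eS2[OF sl km] j j' K_def Y_def cc(4)
          using w0 su0 by (simp add: power_divide field_simps) (simp add: power2_eq_square)
      qed
    qed
    finally show ?thesis .
  qed
  have E3: "P^N + M^N = (\<Sum>k<Suc N. gpol (int N) (int N - int k) (s^2) * Y^(N-k))" for N
    using L3[OF cc(1) cc(2), of N] Gsum[of N "s^2" Y] by simp
  have I3: "P^m + M^m = (\<Sum>k<Suc m. gpol (int m) (int m - int k) (s^2)
     * A powi (2*(int m - int k)) * s powi (- 2 * int l * (int m - int k)))"
    unfolding E3
  proof (rule sum.cong[OF refl])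
    fix k assume "k \<in> {..<Suc m}"
    then have km: "k \<le> m" by simp
    show "gpol (int m) (int m - int k) (s^2) * Y^(m-k) = gpol (int m) (int m - int k) (s^2)
     * A powi (2*(int m - int k)) * s powi (- 2 * int l * (int m - int k))"
      unfolding eA[OF km] eS3[OF s2l km] Y_def
      using w0 by (simp add: power_divide field_simps)
  qed
  obtain m' where mm: "m = Suc m'" using assms(4) by (cases m) auto
  have d0: "dpol (int m) (int m - int m) s = 0"
  proof -
    have "int m - 1 = int m'" "int m - int m - 1 = int m' - int (Suc m')" using mm by simp_all
    then show ?thesis unfolding dpol_def using gpol_zero[of m' "Suc m'" "s^2"] assms(4)
      by (simp add: gpol_def hh_neg)
  qed
  have I4: "F1*P^(m-1) + F0*M^(m-1) = (\<Sum>k<Suc m. dpol (int m) (int m - int k) s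
     * A powi (2*(int m - int k) - 1) * s powi (- int l * (2*(int m - int k) - 1)))"
  proof (cases "A = 0")
    case True
    have P0: "P = 0" "M = 0" using True by (simp_all add: P_def M_def)
    have r0: "(\<Sum>k<Suc m. dpol (int m) (int m - int k) s
     * A powi (2*(int m - int k) - 1) * s powi (- int l * (2*(int m - int k) - 1))) = 0"
    proof (rule sum.neutral, intro ballI)
      fix k assume "k \<in> {..<Suc m}"
      have "2*(int m - int k) - 1 \<noteq> 0" by presburger
      then show "dpol (int m) (int m - int k) s * A powi (2*(int m - int k) - 1) * s powi (- int l * (2*(int m - int k) - 1)) = 0"
        using True by simp
    qed
    show ?thesis
    proof (cases m')
      case 0
      have "s^2*u^2 = 1" using True s2 by (simp add: A_def)
      then have "F1 + F0 = 0" by (rule cc(9))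
      then show ?thesis unfolding r0 using mm 0 by simp
    next
      case (Suc i)
      then show ?thesis unfolding r0 using mm P0 by simp
    qed
  next
    case False
    have "A*(F1*P^m' + F0*M^m') = s*u*((P^m + M^m) + s*Y*(P^m' + M^m'))"
    proof -
      have "A*(F1*P^m' + F0*M^m') = (A*F1)*P^m' + (A*F0)*M^m'" by (simp add: algebra_simps)
      also have "\<dots> = s*u*((P^m + M^m) + s*Y*(P^m' + M^m'))" unfolding cc(7) cc(8) mm by (simp add: algebra_simps)
      finally show ?thesis .
    qed
    then have "F1*P^m' + F0*M^m' = (s*u/A)*((P^m + M^m) + s*Y*(P^m' + M^m'))"
      using False by (simp add: field_simps)
    also have "\<dots> = (s*u/A)*(\<Sum>k<Suc m. dpol (int m) (int m - int k) s * Y^(m-k))"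
      unfolding E3 mm Dsum by simp
    also have "\<dots> = (\<Sum>k<Suc m. dpol (int m) (int m - int k) s
     * A powi (2*(int m - int k) - 1) * s powi (- int l * (2*(int m - int k) - 1)))"
      unfolding sum_distrib_left
    proof (rule sum.cong[OF refl])
      fix k assume "k \<in> {..<Suc m}"
      then have km: "k \<le> m" by simp
      show "(s*u/A)*(dpol (int m) (int m - int k) s * Y^(m-k)) = dpol (int m) (int m - int k) s
     * A powi (2*(int m - int k) - 1) * s powi (- int l * (2*(int m - int k) - 1))"
      proof (cases "k = m")
        case True
        then show ?thesis using d0 by simp
      next
        case False
        then have km': "k < m" using km by simp
        then obtain j where j: "m - k = Suc j" by (metis Suc_diff_Suc)
        then have j': "m - k - 1 = j" by simp
        show ?thesis
          unfolding eA'[OF km'] eS4[OF sl km'] j j' Y_def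
          using w0 su0 False by (simp add: power_divide field_simps) (simp add: power2_eq_square)
      qed
    qed
    finally show ?thesis using mm by simp
  qed
  show ?thesis unfolding sum_conv XP XM hF1 hF0 qA qD using I1 I2 I3 I4 by blast
qed


end
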